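(* Let $\mu$ be a shift-ergodic measure with full support on $Q^{\mathbb{Z}}$ and $F$ a cellular automaton over $Q$ admitting a word $w$ as a wall. Then for every word $v\in Q^*$: $v\in L_\mu(F)$ if and only if there exist integers $t,p\geq1$ and words $v_1,v_2,u$ such that $F^t\big({}^\omega(wu)^\omega\big)={}^\omega(v_1vv_2)^\omega$ and $F^p\big({}^\omega(v_1vv_2)^\omega\big)={}^\omega(v_1vv_2)^\omega$.
   Context: A CA $F$ over finite alphabet $Q$ has radius $r$, local rule $\delta$, global map $F(c)_z=\delta(c_{z-r},\dots,c_{z+r})$. $[u]_i=\{c:c_{[i,i+|u|-1]}=u\}$. $L_\mu(F)=\{u:\mu(F^{-t}([u]_0))\not\to0\}$. ${}^\omega x^\omega$ denotes the bi-infinite configuration obtained by repeating the word $x$ periodically. $\mu$ is shift-ergodic if it is shift-invariant and every shift-invariant measurable set has measure 0 or 1; full support means $\mu([u]_0)>0$ for all words $u$. A word $w$ is a wall for $F$ if for all $c,c'\in[w]_0$: (1) if $c_z=c'_z$ for all $z<0$ then $F^t(c)_z=F^t(c')_z$ for all $z<0$ and $t\ge1$; (2) if $c_z=c'_z$ for all $z\ge|w|$ then $F^t(c)_z=F^t(c')_z$ for all $z\ge|w|$ and $t\ge1$. *)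

theory Defs
  imports "HOL-Probability.Probability"
begin

type_synonym 'q config = "int \<Rightarrow> 'q"

definition config_space :: "'q config measure" where
  "config_space = PiM UNIV (\<lambda>_. count_space UNIV)"

definition global_map :: "nat \<Rightarrow> ('q list \<Rightarrow> 'q) \<Rightarrow> 'q config \<Rightarrow> 'q config" where
  "global_map r \<delta> c = (\<lambda>z. \<delta> (map (\<lambda>i. c (z + i)) [- int r..int r]))"

definition cyl :: "'q list \<Rightarrow> int \<Rightarrow> 'q config set" where
  "cyl u i = {c. \<forall>k < length u. c (i + int k) = u ! k}"

definition shift :: "'q config \<Rightarrow> 'q config" where
  "shift c = (\<lambda>z. c (z + 1))"

definition shift_invariant :: "'q config measure \<Rightarrow> bool" where
  "shift_invariant \<mu> \<longleftrightarrow>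
     (\<forall>A \<in> sets \<mu>. measure \<mu> (shift -` A \<inter> space \<mu>) = measure \<mu> A)"

definition shift_ergodic :: "'q config measure \<Rightarrow> bool" where
  "shift_ergodic \<mu> \<longleftrightarrow> shift_invariant \<mu> \<and>
     (\<forall>A \<in> sets \<mu>. shift -` A \<inter> space \<mu> = A \<longrightarrow> measure \<mu> A = 0 \<or> measure \<mu> A = 1)"

definition full_support :: "'q config measure \<Rightarrow> bool" where
  "full_support \<mu> \<longleftrightarrow> (\<forall>u. measure \<mu> (cyl u 0) > 0)"

definition L_mu :: "'q config measure \<Rightarrow> ('q config \<Rightarrow> 'q config) \<Rightarrow> 'q list set" where
  "L_mu \<mu> F = {u. \<not> ((\<lambda>t. measure \<mu> ((F ^^ t) -` cyl u 0 \<inter> space \<mu>)) \<longlonglongrightarrow> 0)}"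

text \<open>The bi-infinite periodic configuration ^omega x ^omega (x nonempty),
  with x placed starting at cell 0.\<close>
definition periodic_config :: "'q list \<Rightarrow> 'q config" where
  "periodic_config x = (\<lambda>z. x ! nat (z mod int (length x)))"

definition is_wall :: "('q config \<Rightarrow> 'q config) \<Rightarrow> 'q list \<Rightarrow> bool" where
  "is_wall F w \<longleftrightarrow>
     (\<forall>c \<in> cyl w 0. \<forall>c' \<in> cyl w 0.
        ((\<forall>z < 0. c z = c' z) \<longrightarrow>
           (\<forall>t \<ge> 1. \<forall>z < 0. (F ^^ t) c z = (F ^^ t) c' z)) \<and>
        ((\<forall>z \<ge> int (length w). c z = c' z) \<longrightarrow>
           (\<forall>t \<ge> 1. \<forall>z \<ge> int (length w). (F ^^ t) c z = (F ^^ t) c' z)))"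

end

theory Submission
  imports Defs
begin



lemma space_cs[simp]: "space config_space = UNIV"
  unfolding config_space_def by (auto simp: space_PiM PiE_def extensional_def)

lemma coord_set: "{c::'q config. c j = a} \<in> sets config_space"
proof -
  have "(\<lambda>c::'q config. c j) \<in> measurable config_space (count_space UNIV)"
    unfolding config_space_def by (rule measurable_component_singleton) auto
  from measurable_sets[OF this, of "{a}"] show ?thesis by (simp add: vimage_def)
qed

lemma agree_set: "finite J \<Longrightarrow> {c::'q config. \<forall>j\<in>J. c j = g j} \<in> sets config_space"
proof (induction J rule: finite_induct)
  case empty
  then show ?case using sets.top[of config_space] by simp
next
  case (insert x J)
  have "{c::'q config. \<forall>j\<in>insert x J. c j = g j} = {c. c x = g x} \<inter> {c. \<forall>j\<in>J. c j = g j}" by auto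
  then show ?case using insert.IH coord_set[of x "g x"] by (simp only:) (rule sets.Int)
qed

lemma fin_dep_sets:
  fixes P :: "('q::finite) config \<Rightarrow> bool"
  assumes J: "finite J" and dep: "\<And>c c'. (\<forall>j\<in>J. c j = c' j) \<Longrightarrow> P c = P c'"
  shows "{c. P c} \<in> sets config_space"
proof -
  define G where "G = (\<lambda>c. restrict c J) ` {c. P c}"
  have fG: "finite G"
    proof (rule finite_subset[of _ "PiE J (\<lambda>_. UNIV)"])
    show "G \<subseteq> PiE J (\<lambda>_. UNIV)" by (auto simp: G_def)
    show "finite (PiE J (\<lambda>_. UNIV::'q set))" by (intro finite_PiE J) auto
  qed
  have eq: "{c. P c} = (\<Union>g\<in>G. {c. \<forall>j\<in>J. c j = g j})"
  proof (rule set_eqI, rule iffI)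
    fix c assume "c \<in> {c. P c}"
    then show "c \<in> (\<Union>g\<in>G. {c. \<forall>j\<in>J. c j = g j})"
      unfolding G_def by (intro UN_I[of "restrict c J"]) auto
  next
    fix c assume "c \<in> (\<Union>g\<in>G. {c. \<forall>j\<in>J. c j = g j})"
    then obtain x where "P x" "\<forall>j\<in>J. c j = restrict x J j" unfolding G_def by auto
    then show "c \<in> {c. P c}" using dep[of c x] by auto
  qed
  show ?thesis unfolding eq using fG agree_set[OF J] by auto
qed




lemma gm_measurable: "global_map r \<delta> \<in> measurable config_space (config_space :: ('q::finite) config measure)"
proof -
  have "global_map r \<delta> \<in> measurable config_space (PiM UNIV (\<lambda>_. count_space (UNIV::'q set)))"
  proof (rule measurable_PiM_single)
    fix A i
    let ?J = "(\<lambda>k. i + k) ` set [- int r..int r]"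
    have "{c::'q config. global_map r \<delta> c i \<in> A} \<in> sets config_space"
      proof (rule fin_dep_sets[of ?J])
      fix c c' :: "'q config" assume h: "\<forall>j\<in>?J. c j = c' j"
      have "map (\<lambda>k. c (i + k)) [- int r..int r] = map (\<lambda>k. c' (i + k)) [- int r..int r]"
        by (rule map_cong) (use h in auto)
      then show "(global_map r \<delta> c i \<in> A) = (global_map r \<delta> c' i \<in> A)"
        unfolding global_map_def by (rule arg_cong[where f="\<lambda>x. \<delta> x \<in> A"])
    qed simp
    then show "{\<omega> \<in> space config_space. global_map r \<delta> \<omega> i \<in> A} \<in> sets config_space" by simp
  qed (auto simp: space_PiM)
  then show ?thesis by (simp add: config_space_def)
qed

lemma gmn_measurable: "(global_map r \<delta> ^^ n) \<in> measurable config_space (config_space :: ('q::finite) config measure)"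
  proof (induction n)
  case (Suc n)
  then show ?case by (simp only: funpow.simps) (rule measurable_comp[OF _ gm_measurable])
qed simp

lemma gm_sh: "global_map r \<delta> (\<lambda>z. c (z + k)) = (\<lambda>z. global_map r \<delta> c (z + k))"
  unfolding global_map_def by (auto simp: algebra_simps)

lemma gmn_sh: "(global_map r \<delta> ^^ n) (\<lambda>z. c (z + k)) = (\<lambda>z. (global_map r \<delta> ^^ n) c (z + k))"
  by (induction n) (auto simp: gm_sh)

lemma cyl_sh: "((\<lambda>z. c (z + k)) \<in> cyl u i) = (c \<in> cyl u (i + k))"
  unfolding cyl_def by (auto simp: algebra_simps)

lemma wall0_left:
  assumes W: "is_wall F w" and c: "c \<in> cyl w 0" and c': "c' \<in> cyl w 0"
    and ag: "\<forall>z<0. c z = c' z" and t: "t \<ge> 1" and z: "z < 0"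
  shows "(F ^^ t) c z = (F ^^ t) c' z"
proof -
  have "((\<forall>z < 0. c z = c' z) \<longrightarrow> (\<forall>t \<ge> 1. \<forall>z < 0. (F ^^ t) c z = (F ^^ t) c' z))"
    using W c c' unfolding is_wall_def by (elim ballE conjE) (assumption | blast)+
  then show ?thesis using ag t z by simp
qed

lemma wall0_right:
  assumes W: "is_wall F w" and c: "c \<in> cyl w 0" and c': "c' \<in> cyl w 0"
    and ag: "\<forall>z\<ge>int (length w). c z = c' z" and t: "t \<ge> 1" and z: "z \<ge> int (length w)"
  shows "(F ^^ t) c z = (F ^^ t) c' z"
proof -
  have "((\<forall>z \<ge> int (length w). c z = c' z) \<longrightarrow> (\<forall>t \<ge> 1. \<forall>z \<ge> int (length w). (F ^^ t) c z = (F ^^ t) c' z))"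
    using W c c' unfolding is_wall_def by (elim ballE conjE) (assumption | blast)+
  then show ?thesis using ag t z by simp
qed

lemma wall_left:
  assumes W: "is_wall (global_map r \<delta>) w" and c: "c \<in> cyl w a" and c': "c' \<in> cyl w a"
    and ag: "\<forall>z<a. c z = c' z" and t: "t \<ge> 1" and z: "z < a"
  shows "(global_map r \<delta> ^^ t) c z = (global_map r \<delta> ^^ t) c' z"
proof -
  let ?s = "\<lambda>c. (\<lambda>z. c (z + a))"
  have 1: "?s c \<in> cyl w 0" "?s c' \<in> cyl w 0" using c c' by (auto simp: cyl_sh)
  have 2: "\<forall>z<0. ?s c z = ?s c' z" using ag by auto
  have "(global_map r \<delta> ^^ t) (?s c) (z - a) = (global_map r \<delta> ^^ t) (?s c') (z - a)"
    by (rule wall0_left[OF W 1 2 t]) (use z in simp)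
  then show ?thesis by (simp add: gmn_sh)
qed

lemma wall_right:
  assumes W: "is_wall (global_map r \<delta>) w" and c: "c \<in> cyl w a" and c': "c' \<in> cyl w a"
    and ag: "\<forall>z\<ge>a + int (length w). c z = c' z" and t: "t \<ge> 1" and z: "z \<ge> a + int (length w)"
  shows "(global_map r \<delta> ^^ t) c z = (global_map r \<delta> ^^ t) c' z"
proof -
  let ?s = "\<lambda>c. (\<lambda>z. c (z + a))"
  have 1: "?s c \<in> cyl w 0" "?s c' \<in> cyl w 0" using c c' by (auto simp: cyl_sh)
  have 2: "\<forall>z\<ge>int (length w). ?s c z = ?s c' z"
  proof (intro allI impI)
    fix z assume "z \<ge> int (length w)"
    then show "?s c z = ?s c' z" using ag by (simp add: add.commute)
  qed
  have "(global_map r \<delta> ^^ t) (?s c) (z - a) = (global_map r \<delta> ^^ t) (?s c') (z - a)"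
    by (rule wall0_right[OF W 1 2 t]) (use z in simp)
  then show ?thesis by (simp add: gmn_sh)
qed

lemma locality:
  assumes W: "is_wall (global_map r \<delta>) w"
    and c: "c \<in> cyl w a" "c \<in> cyl w b" and c': "c' \<in> cyl w a" "c' \<in> cyl w b"
    and ag: "\<forall>z. a \<le> z \<and> z < b + int (length w) \<longrightarrow> c z = c' z"
    and t: "t \<ge> 1" and z: "a + int (length w) \<le> z" "z < b"
  shows "(global_map r \<delta> ^^ t) c z = (global_map r \<delta> ^^ t) c' z"
proof -
  define e where "e = (\<lambda>z. if a \<le> z then c' z else c z)"
  have ea: "e \<in> cyl w a" using c' unfolding e_def cyl_def by auto
  have eb: "e \<in> cyl w b" using c(2) c'(2) unfolding e_def cyl_def by auto
  have 1: "(global_map r \<delta> ^^ t) e z = (global_map r \<delta> ^^ t) c' z"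
    by (rule wall_right[OF W ea c'(1) _ t z(1)]) (auto simp: e_def)
  have 2: "(global_map r \<delta> ^^ t) e z = (global_map r \<delta> ^^ t) c z"
    by (rule wall_left[OF W eb c(2) _ t z(2)]) (use ag in \<open>auto simp: e_def\<close>)
  show ?thesis using 1 2 by simp
qed




definition per :: "int \<Rightarrow> 'q config \<Rightarrow> bool" where
  "per P y \<longleftrightarrow> (\<forall>z. y (z + P) = y z)"

lemma per_pc: "s \<noteq> [] \<Longrightarrow> per (int (length s)) (periodic_config s)"
  unfolding per_def periodic_config_def by simp

lemma per_mult: "per P y \<Longrightarrow> y (z + int k * P) = y z"
proof (induction k)
  case (Suc k)
  then have "y (z + int k * P + P) = y (z + int k * P)" unfolding per_def by blast
  then show ?case using Suc by (simp add: algebra_simps)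
qed simp

lemma per_mult_int: "per P y \<Longrightarrow> y (z + k * P) = y z"
proof (cases "k \<ge> 0")
  case True
  assume p: "per P y"
  then show ?thesis using per_mult[OF p, of z "nat k"] True by simp
next
  case False
  assume p: "per P y"
  have "y (z + k * P + int (nat (-k)) * P) = y (z + k * P)" by (rule per_mult[OF p])
  then show ?thesis using False by simp
qed

lemma per_mod: "per P y \<Longrightarrow> y (z mod P) = y z"
  using per_mult_int[of P y "z mod P" "z div P"] by (simp add: algebra_simps)

lemma per_times: assumes "per P y" shows "per (int k * P) y"
  unfolding per_def using per_mult[OF assms] by simp

lemma pc_of_per:
  assumes "P > 0" "per (int P) y"
  shows "y = periodic_config (map (\<lambda>i. y (int i)) [0..<P])"
proof
  fix z
  have "0 \<le> z mod int P" "z mod int P < int P" using assms by auto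
  then have "periodic_config (map (\<lambda>i. y (int i)) [0..<P]) z = y (z mod int P)"
    unfolding periodic_config_def by (simp add: nat_less_iff)
  then show "y z = periodic_config (map (\<lambda>i. y (int i)) [0..<P]) z" using per_mod[OF assms(2)] by simp
qed

lemma per_gmn: "per P y \<Longrightarrow> per P ((global_map r \<delta> ^^ n) y)"
proof -
  assume "per P y"
  then have "(\<lambda>z. y (z + P)) = y" unfolding per_def by auto
  then have "(global_map r \<delta> ^^ n) y = (\<lambda>z. (global_map r \<delta> ^^ n) y (z + P))"
    using gmn_sh[where c=y and k=P and r=r and \<delta>=\<delta> and n=n] by simp
  then show ?thesis unfolding per_def by metis
qed

lemma finite_per:
  assumes "P > 0"
  shows "finite {y :: ('q::finite) config. per (int P) y}"
proof (rule finite_subset)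
  show "{y :: 'q config. per (int P) y} \<subseteq> periodic_config ` {q. length q = P}"
    using pc_of_per[OF assms] by (auto intro!: image_eqI)
  show "finite (periodic_config ` {q::'q list. length q = P})"
    using finite_lists_length_eq[of "UNIV::'q set" P] by (intro finite_imageI) simp
qed

lemma ev_periodic:
  fixes x :: "('q::finite) config"
  assumes "P > 0" "per (int P) x"
  shows "\<exists>i p. p \<ge> 1 \<and> (global_map r \<delta> ^^ (i + p)) x = (global_map r \<delta> ^^ i) x"
proof -
  let ?f = "\<lambda>n. (global_map r \<delta> ^^ n) x"
  have "range ?f \<subseteq> {y. per (int P) y}" using per_gmn[OF assms(2)] by auto
  then have "finite (range ?f)" using finite_per[OF assms(1)] finite_subset by blast
  then have "\<not> inj ?f" using finite_imageD infinite_UNIV_nat by blast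
  then obtain m n where mn: "m \<noteq> n" "?f m = ?f n" unfolding inj_def by blast
  show ?thesis
  proof (cases "m < n")
    case True
    then show ?thesis using mn by (intro exI[of _ m] exI[of _ "n - m"]) auto
  next
    case False
    then show ?thesis using mn by (intro exI[of _ n] exI[of _ "m - n"]) auto
  qed
qed

lemma ev_periodic_later:
  fixes F :: "'a \<Rightarrow> 'a"
  assumes "(F ^^ (i + p)) x = (F ^^ i) x" "t \<ge> i"
  shows "(F ^^ (t + p)) x = (F ^^ t) x"
proof -
  have e1: "t + p = (t - i) + (i + p)" "t = (t - i) + i" using assms(2) by simp_all
  have "(F ^^ (t + p)) x = (F ^^ (t - i)) ((F ^^ (i + p)) x)"
    by (subst e1(1)) (simp only: funpow_add comp_apply)
  also have "\<dots> = (F ^^ t) x" using assms(1) by (subst (2) e1(2)) (simp only: funpow_add comp_apply)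
  finally show ?thesis .
qed




lemma cyl_sets: "cyl u i \<in> sets (config_space :: ('q::finite) config measure)"
proof -
  have "{c::'q config. \<forall>k < length u. c (i + int k) = u ! k} \<in> sets config_space"
    by (rule fin_dep_sets[of "(\<lambda>k. i + int k) ` {..<length u}"]) auto
  then show ?thesis unfolding cyl_def .
qed

lemma shift_cyl: "shift -` cyl u i = cyl u (i + 1)"
  unfolding shift_def cyl_def by (auto simp: algebra_simps)

locale meas =
  fixes \<mu> :: "('q::finite) config measure"
  assumes P: "prob_space \<mu>" and S: "sets \<mu> = sets config_space"
    and SI: "shift_invariant \<mu>"
begin

lemma space_mu[simp]: "space \<mu> = UNIV"
  using sets_eq_imp_space_eq[OF S] by simp

lemma cyl_mu[simp]: "cyl u i \<in> sets \<mu>"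
  using S cyl_sets by auto

lemma shift_meas: "A \<in> sets \<mu> \<Longrightarrow> measure \<mu> (shift -` A) = measure \<mu> A"
  using SI unfolding shift_invariant_def by simp

lemma cyl_step: "measure \<mu> (cyl u (i + 1)) = measure \<mu> (cyl u i)"
  using shift_meas[of "cyl u i"] by (simp add: shift_cyl)

lemma int_shift_const:
  fixes f :: "int \<Rightarrow> real"
  assumes "\<And>i. f (i + 1) = f i"
  shows "f i = f 0"
proof -
  have up: "f (int n) = f 0" for n
  proof (induction n)
    case (Suc n)
    have "f (int n + 1) = f (int n)" by (rule assms)
    then show ?case using Suc by (simp add: add.commute)
  qed simp
  have dn: "f (- int n) = f 0" for n
  proof (induction n)
    case (Suc n)
    have "f (- int (Suc n) + 1) = f (- int (Suc n))" by (rule assms)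
    then show ?case using Suc by simp
  qed simp
  show ?thesis
  proof (cases "i \<ge> 0")
    case True then show ?thesis using up[of "nat i"] by simp
  next
    case False then show ?thesis using dn[of "nat (-i)"] by simp
  qed
qed

lemma cyl_meas_0: "measure \<mu> (cyl u i) = measure \<mu> (cyl u 0)"
  by (rule int_shift_const[where f="\<lambda>i. measure \<mu> (cyl u i)"]) (rule cyl_step)

lemma F_sets: "(global_map r \<delta> ^^ n) -` A \<inter> space \<mu> \<in> sets \<mu>" if "A \<in> sets \<mu>"
proof -
  have "(global_map r \<delta> ^^ n) \<in> measurable \<mu> \<mu>"
    using gmn_measurable[where r=r and \<delta>=\<delta> and n=n] measurable_cong_sets[OF S S] by blast
  then show ?thesis using that by (rule measurable_sets)
qed

end




lemma orbit_const:
  fixes F :: "'a \<Rightarrow> 'a"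
  assumes "(F ^^ t) x = y" "(F ^^ p) y = y"
  shows "(F ^^ (t + k * p)) x = y"
proof (induction k)
  case 0 then show ?case using assms by simp
next
  case (Suc k)
  have e: "t + Suc k * p = p + (t + k * p)" by simp
  have "(F ^^ (t + Suc k * p)) x = (F ^^ p) ((F ^^ (t + k * p)) x)"
    by (simp only: e funpow_add comp_apply)
  then show ?case using Suc assms by simp
qed

lemma backward_core:
  assumes W: "is_wall (global_map r \<delta>) w"
    and s: "s = w @ u" "s \<noteq> []" and q: "q = v1 @ v @ v2" "q \<noteq> []"
    and n: "n \<ge> 1" "(global_map r \<delta> ^^ n) (periodic_config s) = periodic_config q"
    and N: "N = length v1 + length w * length q + length v + 1"
    and X: "X = map (\<lambda>i. periodic_config s (int i)) [0..<N * length s + length w]"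
    and c: "c \<in> cyl X 0"
  shows "(global_map r \<delta> ^^ n) c \<in> cyl v (int (length v1 + length w * length q))"
proof -
  let ?x = "periodic_config s" and ?L = "length s" and ?j = "length v1 + length w * length q"
  have L: "?L \<ge> 1" "length w \<le> ?L" using s by (auto simp: Suc_le_eq)
  have px: "per (int ?L) ?x" using per_pc[OF s(2)] .
  have xw: "?x (int i) = w ! i" if "i < length w" for i
    using that L unfolding periodic_config_def s(1) by (simp add: nth_append)
  have cx: "c z = ?x z" if "0 \<le> z" "z < int (N * ?L + length w)" for z
  proof -
    have k: "nat z < length X" using that by (simp add: X nat_less_iff)
    have "c (0 + int (nat z)) = X ! nat z" using c k unfolding cyl_def by blast
    also have "X ! nat z = ?x (int (nat z))" using k by (simp add: X del: upt_Suc)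
    finally show ?thesis using that by simp
  qed
  have xcyl0: "?x \<in> cyl w 0" unfolding cyl_def using xw by simp
  have xcyl1: "?x \<in> cyl w (int (N * ?L))"
    unfolding cyl_def using xw per_mult[OF px, of _ N] by (simp add: algebra_simps)
  have ccyl0: "c \<in> cyl w 0" unfolding cyl_def
  proof (intro CollectI allI impI)
    fix k assume k: "k < length w"
    then have b: "0 + int k < int (N * ?L + length w)" using k by (simp only: add_0_left of_nat_add[symmetric] of_nat_less_iff) (simp | fail)?
    have "c (0 + int k) = ?x (0 + int k)" by (rule cx[OF _ b]) simp
    then show "c (0 + int k) = w ! k" using xcyl0 k unfolding cyl_def by simp
  qed
  have ccyl1: "c \<in> cyl w (int (N * ?L))" unfolding cyl_def
  proof (intro CollectI allI impI)
    fix k assume k: "k < length w"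
    then have b: "int (N * ?L) + int k < int (N * ?L + length w)" using k by (simp only: add_0_left of_nat_add[symmetric] of_nat_less_iff) (simp | fail)?
    have "c (int (N * ?L) + int k) = ?x (int (N * ?L) + int k)" by (rule cx[OF _ b]) simp
    then show "c (int (N * ?L) + int k) = w ! k" using xcyl1 k unfolding cyl_def by simp
  qed
  have pq: "per (int (length q)) (periodic_config q)" using per_pc[OF q(2)] .
  have NL: "N \<le> N * ?L" using L by simp
  show ?thesis unfolding cyl_def
  proof (intro CollectI allI impI)
    fix k assume k: "k < length v"
    have "length w \<le> length w * length q" using q(2) by (simp add: Suc_le_eq)
    then have "length w \<le> ?j + k" by linarith
    then have z1: "0 + int (length w) \<le> int ?j + int k" by (simp only: add_0_left of_nat_add[symmetric] of_nat_le_iff)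
    have "?j + k < N * ?L" using k NL N by simp
    then have z2: "int ?j + int k < int (N * ?L)" by (simp only: of_nat_add[symmetric] of_nat_less_iff)
    have "(global_map r \<delta> ^^ n) c (int ?j + int k) = (global_map r \<delta> ^^ n) ?x (int ?j + int k)"
      by (rule locality[OF W ccyl0 ccyl1 xcyl0 xcyl1 _ n(1) z1 z2]) (use cx in auto)
    also have "\<dots> = periodic_config q (int (length v1 + k) + int (length w) * int (length q))"
      using n(2) by (simp add: algebra_simps)
    also have "\<dots> = periodic_config q (int (length v1 + k))" by (rule per_mult[OF pq])
    also have "\<dots> = q ! (length v1 + k)"
    proof -
      have lt: "length v1 + k < length q" using k q(1) by simp
      then have "int (length v1 + k) mod int (length q) = int (length v1 + k)" by simp
      then show ?thesis unfolding periodic_config_def by (simp add: nat_add_distrib)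
    qed
    also have "\<dots> = v ! k" unfolding q(1) using k by (simp add: nth_append)
    finally show "(global_map r \<delta> ^^ n) c (int ?j + int k) = v ! k" .
  qed
qed

context meas begin

lemma backward:
  assumes W: "is_wall (global_map r \<delta>) w" and FS: "full_support \<mu>"
    and t: "t \<ge> 1" and p: "p \<ge> 1" and s: "w @ u \<noteq> []" and q: "v1 @ v @ v2 \<noteq> []"
    and e1: "(global_map r \<delta> ^^ t) (periodic_config (w @ u)) = periodic_config (v1 @ v @ v2)"
    and e2: "(global_map r \<delta> ^^ p) (periodic_config (v1 @ v @ v2)) = periodic_config (v1 @ v @ v2)"
  shows "v \<in> L_mu \<mu> (global_map r \<delta>)"
proof -
  define s where "s = w @ u"
  define q where "q = v1 @ v @ v2"
  define N where "N = length v1 + length w * length q + length v + 1"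
  define X where "X = map (\<lambda>i. periodic_config s (int i)) [0..<N * length s + length w]"
  define j where "j = length v1 + length w * length q"
  define F where "F = global_map r \<delta>"
  have sne: "s \<noteq> []" "q \<noteq> []" using s q by (simp_all add: s_def q_def)
  have pos: "measure \<mu> (cyl X (- int j)) > 0"
    using FS cyl_meas_0[of X "- int j"] unfolding full_support_def by simp
  have sub: "cyl X (- int j) \<subseteq> (F ^^ (t + k * p)) -` cyl v 0" for k
  proof
    fix d assume d: "d \<in> cyl X (- int j)"
    let ?c = "\<lambda>z. d (z + - int j)"
    have c: "?c \<in> cyl X 0" using d cyl_sh[where c=d and k="- int j" and u=X and i=0] by simp
    have n: "t + k * p \<ge> 1" using t by simp
    have "(F ^^ (t + k * p)) (periodic_config s) = periodic_config q"
      using orbit_const[where F=F and t=t and p=p and k=k] e1 e2 unfolding s_def q_def F_def by blast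
    then have "(F ^^ (t + k * p)) ?c \<in> cyl v (int j)"
      using backward_core[OF W s_def sne(1) q_def sne(2) n _ N_def X_def c] unfolding F_def j_def by blast
    then have "(\<lambda>z. (F ^^ (t + k * p)) d (z + - int j)) \<in> cyl v (int j)"
      unfolding F_def using gmn_sh[where c=d and k="- int j" and r=r and \<delta>=\<delta> and n="t + k * p"] by simp
    then show "d \<in> (F ^^ (t + k * p)) -` cyl v 0"
      using cyl_sh[where c="(F ^^ (t + k * p)) d" and k="- int j" and u=v and i="int j"] by simp
  qed
  have ge: "measure \<mu> ((F ^^ (t + k * p)) -` cyl v 0 \<inter> space \<mu>) \<ge> measure \<mu> (cyl X (- int j))" for k
  proof -
    interpret prob_space \<mu> by (rule P)
    show ?thesis
      by (rule finite_measure_mono) (use sub[of k] F_sets[where A="cyl v 0" and r=r and \<delta>=\<delta> and n="t + k * p"] in \<open>auto simp: F_def\<close>)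
  qed
  show ?thesis unfolding L_mu_def
  proof (intro CollectI notI)
    assume lim: "(\<lambda>t. measure \<mu> ((global_map r \<delta> ^^ t) -` cyl v 0 \<inter> space \<mu>)) \<longlonglongrightarrow> 0"
    then have "eventually (\<lambda>n. measure \<mu> ((F ^^ n) -` cyl v 0 \<inter> space \<mu>) < measure \<mu> (cyl X (- int j))) sequentially"
      using order_tendstoD(2)[OF lim pos] unfolding F_def by simp
    then obtain M where M: "\<And>n. n \<ge> M \<Longrightarrow> measure \<mu> ((F ^^ n) -` cyl v 0 \<inter> space \<mu>) < measure \<mu> (cyl X (- int j))"
      unfolding eventually_sequentially by blast
    have "t + M * p \<ge> M" using p by (metis le_add2 mult.commute mult_le_mono2 mult_1 order_trans)
    from M[OF this] ge[of M] show False by simp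
  qed
qed

end



context meas begin

lemma shift_null:
  fixes D :: "int \<Rightarrow> 'q config set"
  assumes Ds: "\<And>z. D z \<in> sets \<mu>" and Dsh: "\<And>z. shift -` D z = D (z + 1)"
    and Dd: "\<And>z z'. z \<noteq> z' \<Longrightarrow> D z \<inter> D z' = {}"
  shows "D z \<in> null_sets \<mu>"
proof -
  interpret prob_space \<mu> by (rule P)
  have eq: "measure \<mu> (D z) = measure \<mu> (D 0)" for z
    by (rule int_shift_const[where f="\<lambda>z. measure \<mu> (D z)"]) (use shift_meas[OF Ds] Dsh in simp)
  let ?m = "measure \<mu> (D 0)"
  have bound: "real n * ?m \<le> 1" for n
  proof -
    have "measure \<mu> (\<Union>i\<in>{..<n}. D (int i)) = (\<Sum>i\<in>{..<n}. measure \<mu> (D (int i)))"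
      by (rule finite_measure_finite_Union) (auto simp: Ds disjoint_family_on_def intro!: Dd)
    also have "\<dots> = (\<Sum>i\<in>{..<n}. ?m)" by (rule sum.cong[OF refl]) (rule eq)
    also have "\<dots> = real n * ?m" by simp
    finally show ?thesis using prob_le_1 by metis
  qed
  have "?m = 0"
  proof (rule ccontr)
    assume "?m \<noteq> 0"
    then have mpos: "?m > 0" using measure_nonneg[of \<mu> "D 0"] by linarith
    define n where "n = nat (ceiling (2 / ?m))"
    have "real n \<ge> 2 / ?m" unfolding n_def by linarith
    then have "real n * ?m \<ge> 2" using mpos by (simp add: field_simps)
    then show False using bound[of n] by simp
  qed
  then have "measure \<mu> (D z) = 0" using eq by simp
  then show ?thesis using Ds by (auto simp: emeasure_eq_measure)
qed

end



lemma shift_mem_cyl: "(shift c \<in> cyl u i) = (c \<in> cyl u (i + 1))"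
  using shift_cyl[of u i] by blast

lemma unbounded_occ:
  assumes z0: "P (z0::int)" and up: "\<And>z. P z \<Longrightarrow> \<exists>z'>z. P z'"
  shows "\<exists>z \<ge> z0 + int n. P z"
proof (induction n)
  case 0 then show ?case using z0 by auto
next
  case (Suc n)
  then obtain z where "z \<ge> z0 + int n" "P z" by blast
  then obtain z' where "z' > z" "P z'" using up by blast
  then show ?case using \<open>z \<ge> z0 + int n\<close> by (intro exI[of _ z']) auto
qed

lemma unbounded_occ_down:
  assumes z0: "P (z0::int)" and dn: "\<And>z. P z \<Longrightarrow> \<exists>z'<z. P z'"
  shows "\<exists>z \<le> z0 - int n. P z"
proof (induction n)
  case 0 then show ?case using z0 by auto
next
  case (Suc n)
  then obtain z where "z \<le> z0 - int n" "P z" by blast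
  then obtain z' where "z' < z" "P z'" using dn by blast
  then show ?case using \<open>z \<le> z0 - int n\<close> by (intro exI[of _ z']) auto
qed

context meas begin

lemma good_ae:
  assumes E: "shift_ergodic \<mu>" and FS: "full_support \<mu>"
  shows "\<exists>G \<in> sets \<mu>. measure \<mu> G = 1 \<and>
     (\<forall>c\<in>G. \<forall>B. (\<exists>z>B. c \<in> cyl w z) \<and> (\<exists>z<B. c \<in> cyl w z))"
proof -
  interpret prob_space \<mu> by (rule P)
  define A where "A = (\<Union>z. cyl w z)"
  have As: "A \<in> sets \<mu>" unfolding A_def by (intro sets.countable_UN'') auto
  have Ash: "shift -` A = A"
  proof
    show "shift -` A \<subseteq> A" unfolding A_def by (auto simp: shift_mem_cyl)
    show "A \<subseteq> shift -` A"
    proof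
      fix c assume "c \<in> A"
      then obtain z where "c \<in> cyl w z" unfolding A_def by auto
      then have "shift c \<in> cyl w (z - 1)" using shift_mem_cyl[of c w "z - 1"] by simp
      then show "c \<in> shift -` A" unfolding A_def by auto
    qed
  qed
  have "measure \<mu> A = 0 \<or> measure \<mu> A = 1" using E As Ash unfolding shift_ergodic_def by auto
  moreover have "measure \<mu> A \<ge> measure \<mu> (cyl w 0)"
    by (rule finite_measure_mono) (auto simp: A_def As)
  moreover have "measure \<mu> (cyl w 0) > 0" using FS unfolding full_support_def by blast
  ultimately have A1: "measure \<mu> A = 1" by linarith
  define Dr where "Dr z = {c. c \<in> cyl w z \<and> (\<forall>z'>z. c \<notin> cyl w z')}" for z
  define Dl where "Dl z = {c. c \<in> cyl w z \<and> (\<forall>z'<z. c \<notin> cyl w z')}" for z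
  have Drs: "Dr z \<in> sets \<mu>" for z
  proof -
    have "Dr z = cyl w z \<inter> (\<Inter>z'\<in>{z<..}. UNIV - cyl w z')" unfolding Dr_def by auto
    moreover have "(\<Inter>z'\<in>{z<..}. UNIV - cyl w z') \<in> sets \<mu>"
      by (rule sets.countable_INT'') (auto simp: sets.top[of \<mu>, simplified])
    ultimately show ?thesis by auto
  qed
  have Dls: "Dl z \<in> sets \<mu>" for z
  proof -
    have "Dl z = cyl w z \<inter> (\<Inter>z'\<in>{..<z}. UNIV - cyl w z')" unfolding Dl_def by auto
    moreover have "(\<Inter>z'\<in>{..<z}. UNIV - cyl w z') \<in> sets \<mu>"
      by (rule sets.countable_INT'') (auto simp: sets.top[of \<mu>, simplified])
    ultimately show ?thesis by auto
  qed
  have Drsh: "shift -` Dr z = Dr (z + 1)" for z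
  proof (rule set_eqI)
    fix c
    have "(\<forall>z'>z. shift c \<notin> cyl w z') = (\<forall>z'>z + 1. c \<notin> cyl w z')"
    proof
      assume h: "\<forall>z'>z. shift c \<notin> cyl w z'"
      show "\<forall>z'>z + 1. c \<notin> cyl w z'"
      proof (intro allI impI)
        fix z' assume "z' > z + 1"
        then show "c \<notin> cyl w z'" using h[rule_format, of "z' - 1"] shift_mem_cyl[of c w "z' - 1"] by simp
      qed
    next
      assume h: "\<forall>z'>z + 1. c \<notin> cyl w z'"
      show "\<forall>z'>z. shift c \<notin> cyl w z'" using h shift_mem_cyl[of c w] by simp
    qed
    then show "c \<in> shift -` Dr z \<longleftrightarrow> c \<in> Dr (z + 1)" unfolding Dr_def using shift_mem_cyl[of c w z] by simp
  qed
  have Dlsh: "shift -` Dl z = Dl (z + 1)" for z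
  proof (rule set_eqI)
    fix c
    have "(\<forall>z'<z. shift c \<notin> cyl w z') = (\<forall>z'<z + 1. c \<notin> cyl w z')"
    proof
      assume h: "\<forall>z'<z. shift c \<notin> cyl w z'"
      show "\<forall>z'<z + 1. c \<notin> cyl w z'"
      proof (intro allI impI)
        fix z' assume "z' < z + 1"
        then show "c \<notin> cyl w z'" using h[rule_format, of "z' - 1"] shift_mem_cyl[of c w "z' - 1"] by simp
      qed
    next
      assume h: "\<forall>z'<z + 1. c \<notin> cyl w z'"
      show "\<forall>z'<z. shift c \<notin> cyl w z'" using h shift_mem_cyl[of c w] by simp
    qed
    then show "c \<in> shift -` Dl z \<longleftrightarrow> c \<in> Dl (z + 1)" unfolding Dl_def using shift_mem_cyl[of c w z] by simp
  qed
  have Drd: "z \<noteq> z' \<Longrightarrow> Dr z \<inter> Dr z' = {}" for z z'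
    unfolding Dr_def by (auto simp: neq_iff)
  have Dld: "z \<noteq> z' \<Longrightarrow> Dl z \<inter> Dl z' = {}" for z z'
    unfolding Dl_def by (auto simp: neq_iff)
  define N where "N = (\<Union>z. Dr z) \<union> (\<Union>z. Dl z)"
  have Nnull: "N \<in> null_sets \<mu>"
    unfolding N_def
    using shift_null[of Dr, OF Drs Drsh Drd] shift_null[of Dl, OF Dls Dlsh Dld]
    by (intro null_sets.Un null_sets_UN') auto
  define G where "G = A - N"
  have Gs: "G \<in> sets \<mu>" unfolding G_def using As Nnull by auto
  have G1: "measure \<mu> G = 1" unfolding G_def using measure_Diff_null_set[OF As Nnull] A1 by simp
  have Gprop: "(\<exists>z>B. c \<in> cyl w z) \<and> (\<exists>z<B. c \<in> cyl w z)" if c: "c \<in> G" for c B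
  proof -
    obtain z0 where z0: "c \<in> cyl w z0" using c unfolding G_def A_def by auto
    have up: "\<exists>z'>z. c \<in> cyl w z'" if "c \<in> cyl w z" for z
      using c that unfolding G_def N_def Dr_def by auto
    have dn: "\<exists>z'<z. c \<in> cyl w z'" if "c \<in> cyl w z" for z
      using c that unfolding G_def N_def Dl_def by auto
    obtain z1 where z1: "z1 \<ge> z0 + int (nat (B - z0 + 1))" "c \<in> cyl w z1"
      using unbounded_occ[of "\<lambda>z. c \<in> cyl w z", OF z0 up] by blast
    obtain z2 where z2: "z2 \<le> z0 - int (nat (z0 - B + 1))" "c \<in> cyl w z2"
      using unbounded_occ_down[of "\<lambda>z. c \<in> cyl w z", OF z0 dn] by blast
    have "z1 > B" using z1(1) by (auto split: if_splits)
    moreover have "z2 < B" using z2(1) by (auto split: if_splits)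
    ultimately show ?thesis using z1(2) z2(2) by blast
  qed
  show ?thesis using Gs G1 Gprop by blast
qed

end



lemma forward_core:
  assumes W: "is_wall (global_map r \<delta>) w"
    and ca: "c \<in> cyl w a" and cb: "c \<in> cyl w b"
    and a: "a + int (length w) \<le> 0" and b: "int (length v) + 1 \<le> b"
    and t: "t \<ge> 1" and p: "p \<ge> 1"
    and cv: "(global_map r \<delta> ^^ t) c \<in> cyl v 0"
    and s: "s = map (\<lambda>i. c (a + int i)) [0..<nat (b - a)]"
    and per: "(global_map r \<delta> ^^ (t + p)) (periodic_config s) = (global_map r \<delta> ^^ t) (periodic_config s)"
  shows "\<exists>t p :: nat. \<exists>v1 v2 u. t \<ge> 1 \<and> p \<ge> 1 \<and>
       w @ u \<noteq> [] \<and> v1 @ v @ v2 \<noteq> [] \<and>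
       (global_map r \<delta> ^^ t) (periodic_config (w @ u)) = periodic_config (v1 @ v @ v2) \<and>
       (global_map r \<delta> ^^ p) (periodic_config (v1 @ v @ v2)) = periodic_config (v1 @ v @ v2)"
proof -
  let ?F = "global_map r \<delta>"
  define L where "L = nat (b - a)"
  have L: "int L = b - a" "L \<ge> 1" "length w \<le> L" using a b unfolding L_def by auto
  have sL: "length s = L" unfolding s L_def by simp
  have sne: "s \<noteq> []" using sL L by auto
  have snth: "s ! i = c (a + int i)" if "i < L" for i using that unfolding s L_def by simp
  define x where "x = periodic_config s"
  have px: "per (int L) x" unfolding x_def using per_pc[OF sne] sL by simp
  define x' where "x' = (\<lambda>z. x (z + - a))"
  have x'c: "x' z = c z" if "a \<le> z" "z < b + int (length w)" for z
  proof (cases "z < b")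
    case True
    have "x' z = x (z - a)" unfolding x'_def by simp
    also have "\<dots> = s ! nat (z - a)"
    proof -
      have "(z - a) mod int L = z - a" using True that L by simp
      then show ?thesis unfolding x_def periodic_config_def sL by simp
    qed
    also have "\<dots> = c z" using snth[of "nat (z - a)"] True that L by simp
    finally show ?thesis .
  next
    case False
    have "x' z = x (z - a - int L)" unfolding x'_def using per_mult_int[OF px, of "z - a - int L" 1] by simp
    also have "\<dots> = s ! nat (z - b)"
    proof -
      have "(z - a - int L) mod int L = z - b" using False that L by simp
      then show ?thesis unfolding x_def periodic_config_def sL using L by simp
    qed
    also have "\<dots> = c (a + (z - b))" using snth[of "nat (z - b)"] False that L by simp
    also have "\<dots> = w ! nat (z - b)"
    proof -
      have kk: "nat (z - b) < length w" "int (nat (z - b)) = z - b" using False that by auto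
      from ca have "\<forall>k<length w. c (a + int k) = w ! k" by (simp add: cyl_def)
      then show ?thesis using kk by metis
    qed
    also have "\<dots> = c z"
    proof -
      have kk: "nat (z - b) < length w" "int (nat (z - b)) = z - b" using False that by auto
      from cb have "\<forall>k<length w. c (b + int k) = w ! k" by (simp add: cyl_def)
      then have "c (b + int (nat (z - b))) = w ! nat (z - b)" using kk by blast
      then show ?thesis using kk by simp
    qed
    finally show ?thesis .
  qed
  have x'a: "x' \<in> cyl w a" using ca x'c L unfolding cyl_def by auto
  have x'b: "x' \<in> cyl w b" using cb x'c L unfolding cyl_def by auto
  define y where "y = (?F ^^ t) x"
  have yv: "y \<in> cyl v (- a)"
  proof -
    have "(?F ^^ t) x' \<in> cyl v 0" unfolding cyl_def
    proof (intro CollectI allI impI)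
      fix k assume k: "k < length v"
      have "(?F ^^ t) x' (0 + int k) = (?F ^^ t) c (0 + int k)"
        by (rule locality[OF W x'a x'b ca cb _ t]) (use x'c a b k in auto)
      then show "(?F ^^ t) x' (0 + int k) = v ! k" using cv k unfolding cyl_def by simp
    qed
    then have "(\<lambda>z. y (z + - a)) \<in> cyl v 0" unfolding y_def x'_def by (simp only: gmn_sh)
    then show ?thesis using cyl_sh[where c=y and k="- a" and u=v and i=0] by simp
  qed
  have py: "per (int L) y" unfolding y_def by (rule per_gmn[OF px])
  define na where "na = nat (- a)"
  have na: "int na = - a" unfolding na_def using a by simp
  define P where "P = L * (na + length v + 1)"
  have P: "P \<ge> na + length v + 1"
  proof -
    have "1 * (na + length v + 1) \<le> L * (na + length v + 1)" by (rule mult_le_mono1) (use L in simp)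
    then show ?thesis unfolding P_def by simp
  qed
  have pyP: "per (int P) y" unfolding P_def using per_times[OF py, of "na + length v + 1"] by (simp add: algebra_simps)
  define q where "q = map (\<lambda>i. y (int i)) [0..<P]"
  have yq: "y = periodic_config q" unfolding q_def by (rule pc_of_per) (use P pyP in auto)
  have qlen: "length q = P" unfolding q_def by simp
  have mid: "take (length v) (drop na q) = v"
  proof (rule nth_equalityI)
    show "length (take (length v) (drop na q)) = length v" using qlen P by simp
    fix k assume "k < length (take (length v) (drop na q))"
    then have k: "k < length v" by simp
    have "take (length v) (drop na q) ! k = q ! (na + k)" using k qlen P by simp
    also have "\<dots> = y (int (na + k))" unfolding q_def using k P by (simp del: upt_Suc)
    also have "\<dots> = v ! k" using yv k na unfolding cyl_def by simp
    finally show "take (length v) (drop na q) ! k = v ! k" .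
  qed
  have qdec: "q = take na q @ v @ drop (na + length v) q"
  proof -
    have "q = take na q @ drop na q" by simp
    also have "drop na q = take (length v) (drop na q) @ drop (length v) (drop na q)" by (rule append_take_drop_id[symmetric])
    finally show ?thesis using mid by (simp add: add.commute)
  qed
  have qne: "q \<noteq> []" using qlen P by auto
  define u where "u = drop (length w) s"
  have su: "s = w @ u"
  proof -
    have "take (length w) s = w"
    proof (rule nth_equalityI)
      show "length (take (length w) s) = length w" using sL L by simp
      fix k assume "k < length (take (length w) s)"
      then have k: "k < length w" by simp
      then have "take (length w) s ! k = c (a + int k)" using snth L by simp
      then show "take (length w) s ! k = w ! k" using ca k unfolding cyl_def by simp
    qed
    then show ?thesis unfolding u_def by (metis append_take_drop_id)
  qed
  have e1: "(?F ^^ t) (periodic_config (w @ u)) = periodic_config (take na q @ v @ drop (na + length v) q)"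
    using yq qdec su unfolding y_def x_def by simp
  have e2: "(?F ^^ p) y = y"
  proof -
    have "(?F ^^ p) y = (?F ^^ (p + t)) x" unfolding y_def by (simp add: funpow_add)
    then show ?thesis using per unfolding y_def x_def by (simp add: add.commute)
  qed
  show ?thesis
    apply (rule exI[of _ t], rule exI[of _ p], rule exI[of _ "take na q"], rule exI[of _ "drop (na + length v) q"], rule exI[of _ u])
    using t p sne su qne qdec e1 e2 yq by simp
qed




lemma cyl_agree:
  assumes "\<forall>j\<in>{- int n..<int n + int (length w)}. c j = c' j" "- int n \<le> a" "a \<le> int n"
  shows "(c \<in> cyl w a) = (c' \<in> cyl w a)"
proof -
  have e: "c (a + int k) = c' (a + int k)" if k: "k < length w" for k
  proof -
    have "a + int k \<in> {- int n..<int n + int (length w)}" using assms(2,3) k by simp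
    then show ?thesis using assms(1) by blast
  qed
  show ?thesis unfolding cyl_def using e by auto
qed

context meas begin

lemma forward:
  assumes E: "shift_ergodic \<mu>" and FS: "full_support \<mu>" and W: "is_wall (global_map r \<delta>) w"
    and vL: "v \<in> L_mu \<mu> (global_map r \<delta>)"
  shows "\<exists>t p :: nat. \<exists>v1 v2 u. t \<ge> 1 \<and> p \<ge> 1 \<and>
       w @ u \<noteq> [] \<and> v1 @ v @ v2 \<noteq> [] \<and>
       (global_map r \<delta> ^^ t) (periodic_config (w @ u)) = periodic_config (v1 @ v @ v2) \<and>
       (global_map r \<delta> ^^ p) (periodic_config (v1 @ v @ v2)) = periodic_config (v1 @ v @ v2)"
proof -
  interpret prob_space \<mu> by (rule P)
  let ?F = "global_map r \<delta>"
  let ?P = "\<lambda>t. (?F ^^ t) -` cyl v 0 \<inter> space \<mu>"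
  obtain G where Gs: "G \<in> sets \<mu>" and G1: "measure \<mu> G = 1"
    and Gp: "\<And>c B. c \<in> G \<Longrightarrow> (\<exists>z>B. c \<in> cyl w z) \<and> (\<exists>z<B. c \<in> cyl w z)"
    using good_ae[OF E FS, of w] by blast
  define Wn where "Wn n = {c. \<exists>a b. - int n \<le> a \<and> a + int (length w) \<le> 0 \<and> int (length v) + 1 \<le> b \<and> b \<le> int n
      \<and> c \<in> cyl w a \<and> c \<in> cyl w b}" for n :: nat
  have Wns: "Wn n \<in> sets \<mu>" for n
  proof -
    have "Wn n \<in> sets config_space" unfolding Wn_def
    proof (rule fin_dep_sets[of "{- int n..<int n + int (length w)}"])
      fix c c' :: "'q config" assume h: "\<forall>j\<in>{- int n..<int n + int (length w)}. c j = c' j"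
      show "(\<exists>a b. - int n \<le> a \<and> a + int (length w) \<le> 0 \<and> int (length v) + 1 \<le> b \<and> b \<le> int n \<and> c \<in> cyl w a \<and> c \<in> cyl w b) =
            (\<exists>a b. - int n \<le> a \<and> a + int (length w) \<le> 0 \<and> int (length v) + 1 \<le> b \<and> b \<le> int n \<and> c' \<in> cyl w a \<and> c' \<in> cyl w b)"
      proof (intro iffI; elim exE conjE)
        fix a b assume *: "- int n \<le> a" "a + int (length w) \<le> 0" "int (length v) + 1 \<le> b" "b \<le> int n" "c \<in> cyl w a" "c \<in> cyl w b"
        then show "\<exists>a b. - int n \<le> a \<and> a + int (length w) \<le> 0 \<and> int (length v) + 1 \<le> b \<and> b \<le> int n \<and> c' \<in> cyl w a \<and> c' \<in> cyl w b"
          using cyl_agree[OF h, of a] cyl_agree[OF h, of b] by (intro exI[of _ a] exI[of _ b]) auto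
      next
        fix a b assume *: "- int n \<le> a" "a + int (length w) \<le> 0" "int (length v) + 1 \<le> b" "b \<le> int n" "c' \<in> cyl w a" "c' \<in> cyl w b"
        then show "\<exists>a b. - int n \<le> a \<and> a + int (length w) \<le> 0 \<and> int (length v) + 1 \<le> b \<and> b \<le> int n \<and> c \<in> cyl w a \<and> c \<in> cyl w b"
          using cyl_agree[OF h, of a] cyl_agree[OF h, of b] by (intro exI[of _ a] exI[of _ b]) auto
      qed
    qed simp
    then show ?thesis using S by simp
  qed
  have "Wn m \<subseteq> Wn n" if mn: "m \<le> n" for m n
  proof
    fix c assume "c \<in> Wn m"
    then obtain a b where ab: "- int m \<le> a" "a + int (length w) \<le> 0" "int (length v) + 1 \<le> b" "b \<le> int m"
      "c \<in> cyl w a" "c \<in> cyl w b" unfolding Wn_def by blast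
    show "c \<in> Wn n" unfolding Wn_def using ab mn by (intro CollectI exI[of _ a] exI[of _ b]) auto
  qed
  then have inc: "incseq Wn" unfolding incseq_def by blast
  have GW: "G \<subseteq> (\<Union>n. Wn n)"
  proof
    fix c assume c: "c \<in> G"
    obtain b where b: "b > int (length v)" "c \<in> cyl w b" using Gp[OF c, of "int (length v)"] by blast
    obtain a where a: "a < 1 - int (length w)" "c \<in> cyl w a" using Gp[OF c, of "1 - int (length w)"] by blast
    have "c \<in> Wn (nat (max b (- a)))" unfolding Wn_def using a b by (intro CollectI exI[of _ a] exI[of _ b]) auto
    then show "c \<in> (\<Union>n. Wn n)" by blast
  qed
  have U1: "measure \<mu> (\<Union>n. Wn n) = 1"
  proof -
    have "(\<Union>n. Wn n) \<in> sets \<mu>" using Wns by auto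
    then have "measure \<mu> G \<le> measure \<mu> (\<Union>n. Wn n)" using GW by (intro finite_measure_mono)
    moreover have "measure \<mu> (\<Union>n. Wn n) \<le> 1" by (rule prob_le_1)
    ultimately show ?thesis using G1 by linarith
  qed
  have lim: "(\<lambda>n. measure \<mu> (Wn n)) \<longlonglongrightarrow> 1"
    using finite_Lim_measure_incseq[of Wn] Wns inc U1 by auto
  obtain \<epsilon> where eps: "\<epsilon> > 0" and freq: "\<And>M. \<exists>t\<ge>M. measure \<mu> (?P t) \<ge> \<epsilon>"
  proof -
    have "\<not> (\<lambda>t. measure \<mu> (?P t)) \<longlonglongrightarrow> 0" using vL unfolding L_mu_def by simp
    then have "\<not> (\<forall>r>0. \<exists>no. \<forall>n\<ge>no. norm (measure \<mu> (?P n) - 0) < r)" unfolding LIMSEQ_iff .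
    then obtain r where r: "r > 0" "\<forall>no. \<exists>n\<ge>no. \<not> measure \<mu> (?P n) < r" by auto
    then have "\<forall>M. \<exists>t\<ge>M. measure \<mu> (?P t) \<ge> r" by (simp add: not_less)
    then show ?thesis using that r(1) by blast
  qed
  have "eventually (\<lambda>n. measure \<mu> (Wn n) > 1 - \<epsilon>) sequentially"
    using order_tendstoD(1)[OF lim] eps by simp
  then obtain n where n: "measure \<mu> (Wn n) > 1 - \<epsilon>" using eventually_sequentially by auto
  have "\<forall>s. \<exists>ip :: nat \<times> nat. s \<noteq> [] \<longrightarrow> snd ip \<ge> 1 \<and>
      (?F ^^ (fst ip + snd ip)) (periodic_config s) = (?F ^^ fst ip) (periodic_config s)"
  proof
    fix s :: "'q list"
    show "\<exists>ip :: nat \<times> nat. s \<noteq> [] \<longrightarrow> snd ip \<ge> 1 \<and>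
      (?F ^^ (fst ip + snd ip)) (periodic_config s) = (?F ^^ fst ip) (periodic_config s)"
    proof (cases "s = []")
      case False
      then obtain i p where "p \<ge> 1" "(?F ^^ (i + p)) (periodic_config s) = (?F ^^ i) (periodic_config s)"
        using ev_periodic[of "length s" "periodic_config s" r \<delta>] per_pc[OF False] by auto
      then show ?thesis by (intro exI[of _ "(i, p)"]) auto
    qed auto
  qed
  then obtain g where g0: "\<forall>s. s \<noteq> [] \<longrightarrow> snd (g s) \<ge> 1 \<and>
      (?F ^^ (fst (g s) + snd (g s))) (periodic_config s) = (?F ^^ fst (g s)) (periodic_config s)"
    by (rule choice[THEN exE])
  have g: "\<And>s. s \<noteq> [] \<Longrightarrow> snd (g s) \<ge> 1 \<and>
      (?F ^^ (fst (g s) + snd (g s))) (periodic_config s) = (?F ^^ fst (g s)) (periodic_config s)"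
    using g0 by blast
  define Sn where "Sn = {s :: 'q list. length s \<le> 2 * n}"
  have Sfin: "finite Sn" unfolding Sn_def using finite_lists_length_le[of "UNIV :: 'q set" "2 * n"] by simp
  define T where "T = Suc (Max ((\<lambda>s. fst (g s)) ` Sn))"
  obtain t where t: "t \<ge> T" "measure \<mu> (?P t) \<ge> \<epsilon>" using freq by blast
  have "Wn n \<inter> ?P t \<noteq> {}"
  proof
    assume "Wn n \<inter> ?P t = {}"
    then have "?P t \<subseteq> space \<mu> - Wn n" by auto
    then have "measure \<mu> (?P t) \<le> measure \<mu> (space \<mu> - Wn n)"
      by (intro finite_measure_mono) (use sets.compl_sets[OF Wns[of n]] in simp_all)
    also have "\<dots> = 1 - measure \<mu> (Wn n)" using finite_measure_compl[OF Wns[of n]] prob_space by simp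
    finally show False using t n by simp
  qed
  then obtain c where c: "c \<in> Wn n" "(?F ^^ t) c \<in> cyl v 0" by auto
  then obtain a b where ab: "- int n \<le> a" "a + int (length w) \<le> 0" "int (length v) + 1 \<le> b" "b \<le> int n"
    "c \<in> cyl w a" "c \<in> cyl w b" unfolding Wn_def by blast
  define s where "s = map (\<lambda>i. c (a + int i)) [0..<nat (b - a)]"
  have sne: "s \<noteq> []" unfolding s_def using ab by auto
  have sS: "s \<in> Sn" unfolding s_def Sn_def using ab by auto
  have "fst (g s) \<le> Max ((\<lambda>s. fst (g s)) ` Sn)" using Sfin sS by auto
  then have ti: "t \<ge> fst (g s)" using t unfolding T_def by simp
  have t1: "t \<ge> 1" using t unfolding T_def by simp
  have gp: "snd (g s) \<ge> 1" using g[OF sne] by simp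
  have per: "(?F ^^ (t + snd (g s))) (periodic_config s) = (?F ^^ t) (periodic_config s)"
    using ev_periodic_later[OF conjunct2[OF g[OF sne]] ti] .
  show ?thesis
    by (rule forward_core[OF W ab(5) ab(6) ab(2) ab(3) t1 gp c(2) s_def per])
qed

end

theorem proposition1:
  fixes \<mu> :: "('q::finite) config measure"
    and r :: nat and \<delta> :: "'q list \<Rightarrow> 'q" and w :: "'q list"
  assumes "prob_space \<mu>"
    and "sets \<mu> = sets config_space"
    and "shift_ergodic \<mu>"
    and "full_support \<mu>"
    and "is_wall (global_map r \<delta>) w"
  shows "v \<in> L_mu \<mu> (global_map r \<delta>) \<longleftrightarrow>
    (\<exists>t p :: nat. \<exists>v1 v2 u :: 'q list. t \<ge> 1 \<and> p \<ge> 1 \<and>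
       w @ u \<noteq> [] \<and> v1 @ v @ v2 \<noteq> [] \<and>
       (global_map r \<delta> ^^ t) (periodic_config (w @ u)) = periodic_config (v1 @ v @ v2) \<and>
       (global_map r \<delta> ^^ p) (periodic_config (v1 @ v @ v2)) = periodic_config (v1 @ v @ v2))"
proof -
  have SI: "shift_invariant \<mu>" using assms(3) unfolding shift_ergodic_def by blast
  interpret meas \<mu> by (rule meas.intro[OF assms(1) assms(2) SI])
  show ?thesis
  proof
    assume "v \<in> L_mu \<mu> (global_map r \<delta>)"
    then show "\<exists>t p :: nat. \<exists>v1 v2 u :: 'q list. t \<ge> 1 \<and> p \<ge> 1 \<and>
       w @ u \<noteq> [] \<and> v1 @ v @ v2 \<noteq> [] \<and>
       (global_map r \<delta> ^^ t) (periodic_config (w @ u)) = periodic_config (v1 @ v @ v2) \<and>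
       (global_map r \<delta> ^^ p) (periodic_config (v1 @ v @ v2)) = periodic_config (v1 @ v @ v2)"
      by (rule forward[OF assms(3,4,5)])
  next
    assume "\<exists>t p :: nat. \<exists>v1 v2 u :: 'q list. t \<ge> 1 \<and> p \<ge> 1 \<and>
       w @ u \<noteq> [] \<and> v1 @ v @ v2 \<noteq> [] \<and>
       (global_map r \<delta> ^^ t) (periodic_config (w @ u)) = periodic_config (v1 @ v @ v2) \<and>
       (global_map r \<delta> ^^ p) (periodic_config (v1 @ v @ v2)) = periodic_config (v1 @ v @ v2)"
    then obtain t p v1 v2 u where h: "t \<ge> 1" "p \<ge> 1" "w @ u \<noteq> []" "v1 @ v @ v2 \<noteq> []"
      "(global_map r \<delta> ^^ t) (periodic_config (w @ u)) = periodic_config (v1 @ v @ v2)"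
      "(global_map r \<delta> ^^ p) (periodic_config (v1 @ v @ v2)) = periodic_config (v1 @ v @ v2)"
      by blast
    show "v \<in> L_mu \<mu> (global_map r \<delta>)" by (rule backward[OF assms(5,4) h])
  qed
qed



end
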